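(* Let $G$ be any graph and let $C$ be a set of $k$ bicliques of $G$ such that every two of them are mutually included. Then the elements of $C$ can be ordered as $P_1,\dots,P_k$ and their sides named $P_i=X_iY_i$ ($1\le i\le k$) so that $X_1\subsetneq X_2\subsetneq\cdots\subsetneq X_k$ and $Y_k\subsetneq Y_{k-1}\subsetneq\cdots\subsetneq Y_1$.
   Context: All graphs are finite and simple. A biclique of a graph $G$ is a set $P\subseteq V(G)$ such that the induced subgraph $G[P]$ is a complete bipartite graph with both parts nonempty, and $P$ is inclusion-maximal with this property. Since $G[P]$ is connected, its bipartition into two nonempty independent sets $X,Y$ (every vertex of $X$ adjacent to every vertex of $Y$) is unique; we write $P=XY$ to mean $P=X\cup Y$ with $X,Y$ these two parts, called the sides of $P$. Two bicliques $P,Q$ of $G$ are mutually included if their sides can be named $P=X_PY_P$, $Q=X_QY_Q$ so that $X_Q\subsetneq X_P$ and $Y_P\subsetneq Y_Q$. *)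

theory Defs
  imports Main
begin

definition graph :: "'a set \<Rightarrow> ('a \<Rightarrow> 'a \<Rightarrow> bool) \<Rightarrow> bool" where
  "graph V E \<longleftrightarrow> finite V \<and> (\<forall>x y. E x y \<longrightarrow> x \<in> V \<and> y \<in> V)
     \<and> (\<forall>x y. E x y \<longrightarrow> E y x) \<and> (\<forall>x. \<not> E x x)"

definition independent :: "('a \<Rightarrow> 'a \<Rightarrow> bool) \<Rightarrow> 'a set \<Rightarrow> bool" where
  "independent E S \<longleftrightarrow> (\<forall>x\<in>S. \<forall>y\<in>S. \<not> E x y)"

definition complete_bip :: "('a \<Rightarrow> 'a \<Rightarrow> bool) \<Rightarrow> 'a set \<Rightarrow> 'a set \<Rightarrow> bool" where
  "complete_bip E X Y \<longleftrightarrow> X \<noteq> {} \<and> Y \<noteq> {} \<and> X \<inter> Y = {}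
     \<and> independent E X \<and> independent E Y \<and> (\<forall>x\<in>X. \<forall>y\<in>Y. E x y)"

definition induces_complete_bipartite :: "('a \<Rightarrow> 'a \<Rightarrow> bool) \<Rightarrow> 'a set \<Rightarrow> bool" where
  "induces_complete_bipartite E P \<longleftrightarrow> (\<exists>X Y. P = X \<union> Y \<and> complete_bip E X Y)"

definition biclique :: "'a set \<Rightarrow> ('a \<Rightarrow> 'a \<Rightarrow> bool) \<Rightarrow> 'a set \<Rightarrow> bool" where
  "biclique V E P \<longleftrightarrow> P \<subseteq> V \<and> induces_complete_bipartite E P
     \<and> (\<forall>Q. P \<subset> Q \<and> Q \<subseteq> V \<longrightarrow> \<not> induces_complete_bipartite E Q)"

definition sides :: "('a \<Rightarrow> 'a \<Rightarrow> bool) \<Rightarrow> 'a set \<Rightarrow> 'a set \<Rightarrow> 'a set \<Rightarrow> bool" where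
  "sides E P X Y \<longleftrightarrow> P = X \<union> Y \<and> complete_bip E X Y"

definition mutually_included ::
  "('a \<Rightarrow> 'a \<Rightarrow> bool) \<Rightarrow> 'a set \<Rightarrow> 'a set \<Rightarrow> bool" where
  "mutually_included E P Q \<longleftrightarrow> (\<exists>XP YP XQ YQ. sides E P XP YP \<and> sides E Q XQ YQ
     \<and> XQ \<subset> XP \<and> YP \<subset> YQ)"

end

theory Submission imports Defs begin

lemma side_eq:
  assumes "\<forall>x y. E x y \<longrightarrow> E y x" "complete_bip E X Y" "x \<in> X"
  shows "X = {v \<in> X \<union> Y. \<not> E x v}"
  using assms unfolding complete_bip_def independent_def by blast

lemma sides_unique:
  assumes sym: "\<forall>x y. E x y \<longrightarrow> E y x" and "sides E P X Y" "sides E P X' Y'"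
  shows "(X' = X \<and> Y' = Y) \<or> (X' = Y \<and> Y' = X)"
proof -
  have c: "complete_bip E X Y" "complete_bip E X' Y'" "P = X \<union> Y" "P = X' \<union> Y'"
    using assms(2,3) by (auto simp: sides_def)
  then have cs: "complete_bip E Y X" "complete_bip E Y' X'"
    using sym by (auto simp: complete_bip_def independent_def)
  obtain x where x: "x \<in> X'" using c(2) by (auto simp: complete_bip_def)
  have X': "X' = {v \<in> P. \<not> E x v}" using side_eq[OF sym c(2) x] c by metis
  show ?thesis
  proof (cases "x \<in> X")
    case True
    have "X = {v \<in> P. \<not> E x v}" using side_eq[OF sym c(1) True] c by metis
    then have "X' = X" using X' by simp
    then show ?thesis using c by (auto simp: complete_bip_def)
  next
    case False
    then have "x \<in> Y" using x c by auto
    have "Y = {v \<in> P. \<not> E x v}" using side_eq[OF sym cs(1) \<open>x \<in> Y\<close>] c by auto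
    then have "X' = Y" using X' by simp
    then show ?thesis using c by (auto simp: complete_bip_def)
  qed
qed

definition ori :: "('a \<Rightarrow> 'a \<Rightarrow> bool) \<Rightarrow> 'a set \<Rightarrow> 'a set \<Rightarrow> 'a set \<Rightarrow> 'a set \<Rightarrow> bool" where
  "ori E A B X Y \<longleftrightarrow> (X \<subseteq> A \<and> B \<subseteq> Y) \<or> (A \<subseteq> X \<and> Y \<subseteq> B)"

lemma no_cross:
  assumes sym: "\<forall>x y. E x y \<longrightarrow> E y x" and AB: "complete_bip E A B"
    and Q: "complete_bip E XQ YQ" "ori E A B XQ YQ"
    and R: "complete_bip E XR YR" "ori E A B XR YR"
  shows "\<not> (XQ \<subseteq> YR \<and> XR \<subseteq> YQ)" "\<not> (YQ \<subseteq> XR \<and> YR \<subseteq> XQ)"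
proof -
  have dis: "S = {}" if "S \<subseteq> A" "S \<subseteq> B" for S
    using AB that unfolding complete_bip_def by blast
  have ne: "A \<noteq> {}" "B \<noteq> {}" "XQ \<noteq> {}" "YQ \<noteq> {}" "XR \<noteq> {}" "YR \<noteq> {}"
    using AB Q R unfolding complete_bip_def by auto
  have adj: "\<forall>a\<in>A. \<forall>b\<in>B. E a b" using AB unfolding complete_bip_def by auto
  have indQ: "independent E XQ" "independent E YQ" and indR: "independent E XR" "independent E YR"
    using Q R unfolding complete_bip_def by auto
  have bad: "False" if bI: "independent E S" "T \<subseteq> S" "T \<subseteq> A" "T \<noteq> {}" "B \<subseteq> S" for S T
  proof -
    obtain t where "t \<in> T" using bI(4) by auto
    obtain b where "b \<in> B" using ne by auto
    show False using bI \<open>t \<in> T\<close> \<open>b \<in> B\<close> adj unfolding independent_def by blast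
  qed
  show "\<not> (XQ \<subseteq> YR \<and> XR \<subseteq> YQ)"
  proof
    assume h: "XQ \<subseteq> YR \<and> XR \<subseteq> YQ"
    from Q(2) R(2) show False unfolding ori_def
    proof (elim disjE conjE)
      assume "XQ \<subseteq> A" "B \<subseteq> YQ" "XR \<subseteq> A" "B \<subseteq> YR"
      then show False using bad[OF indR(2), of XQ] h ne by blast
    next
      assume "XQ \<subseteq> A" "B \<subseteq> YQ" "A \<subseteq> XR" "YR \<subseteq> B"
      then show False using dis[of XQ] h ne by blast
    next
      assume "A \<subseteq> XQ" "YQ \<subseteq> B" "XR \<subseteq> A" "B \<subseteq> YR"
      then show False using dis[of XR] h ne by blast
    next
      assume "A \<subseteq> XQ" "YQ \<subseteq> B" "A \<subseteq> XR" "YR \<subseteq> B"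
      then show False using dis[of A] h ne by blast
    qed
  qed
  show "\<not> (YQ \<subseteq> XR \<and> YR \<subseteq> XQ)"
  proof
    assume h: "YQ \<subseteq> XR \<and> YR \<subseteq> XQ"
    from Q(2) R(2) show False unfolding ori_def
    proof (elim disjE conjE)
      assume "XQ \<subseteq> A" "B \<subseteq> YQ" "XR \<subseteq> A" "B \<subseteq> YR"
      then show False using dis[of B] h ne by blast
    next
      assume "XQ \<subseteq> A" "B \<subseteq> YQ" "A \<subseteq> XR" "YR \<subseteq> B"
      then show False using dis[of YR] h ne by blast
    next
      assume "A \<subseteq> XQ" "YQ \<subseteq> B" "XR \<subseteq> A" "B \<subseteq> YR"
      then show False using dis[of YQ] h ne by blast
    next
      assume a: "A \<subseteq> XQ" "YQ \<subseteq> B" "A \<subseteq> XR" "YR \<subseteq> B"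
      obtain a0 where "a0 \<in> A" using ne by auto
      obtain y where "y \<in> YQ" using ne by auto
      show False using a h \<open>a0 \<in> A\<close> \<open>y \<in> YQ\<close> adj indR(1) unfolding independent_def by blast
    qed
  qed
qed

lemma rel:
  assumes sym: "\<forall>x y. E x y \<longrightarrow> E y x" and AB: "complete_bip E A B"
    and Q: "sides E Q XQ YQ" "ori E A B XQ YQ"
    and R: "sides E R XR YR" "ori E A B XR YR"
    and mi: "mutually_included E Q R"
  shows "(XQ \<subset> XR \<and> YR \<subset> YQ) \<or> (XR \<subset> XQ \<and> YQ \<subset> YR)"
proof -
  obtain XQ' YQ' XR' YR' where m: "sides E Q XQ' YQ'" "sides E R XR' YR'" "XR' \<subset> XQ'" "YQ' \<subset> YR'"
    using mi unfolding mutually_included_def by blast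
  have cQ: "complete_bip E XQ YQ" and cR: "complete_bip E XR YR"
    using Q R by (auto simp: sides_def)
  note nc = no_cross[OF sym AB cQ Q(2) cR R(2)]
  from sides_unique[OF sym Q(1) m(1)] show ?thesis
  proof (elim disjE conjE)
    assume q: "XQ' = XQ" "YQ' = YQ"
    from sides_unique[OF sym R(1) m(2)] show ?thesis
    proof (elim disjE conjE)
      assume "XR' = XR" "YR' = YR"
      then show ?thesis using q m(3,4) by simp
    next
      assume "XR' = YR" "YR' = XR"
      then have "YR \<subseteq> XQ" "YQ \<subseteq> XR" using q m(3,4) by auto
      then show ?thesis using nc(2) by blast
    qed
  next
    assume q: "XQ' = YQ" "YQ' = XQ"
    from sides_unique[OF sym R(1) m(2)] show ?thesis
    proof (elim disjE conjE)
      assume "XR' = XR" "YR' = YR"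
      then have "XR \<subseteq> YQ" "XQ \<subseteq> YR" using q m(3,4) by auto
      then show ?thesis using nc(1) by blast
    next
      assume "XR' = YR" "YR' = XR"
      then show ?thesis using q m(3,4) by simp
    qed
  qed
qed

lemma chain_enum:
  fixes f g :: "'b \<Rightarrow> 'a set"
  assumes "finite C" "card C = k"
    and "\<forall>Q\<in>C. \<forall>R\<in>C. Q \<noteq> R \<longrightarrow> (f Q \<subset> f R \<and> g R \<subset> g Q) \<or> (f R \<subset> f Q \<and> g Q \<subset> g R)"
  shows "\<exists>P. bij_betw P {1..k} C \<and> (\<forall>i\<in>{1..k}. \<forall>j\<in>{1..k}. i < j \<longrightarrow> f (P i) \<subset> f (P j) \<and> g (P j) \<subset> g (P i))"
  using assms
proof (induction k arbitrary: C)
  case 0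
  then show ?case by (auto simp: bij_betw_def)
next
  case (Suc k)
  then have ne: "C \<noteq> {}" by auto
  obtain m where m: "m \<in> f ` C" "\<forall>b\<in>f ` C. m \<subseteq> b \<longrightarrow> m = b"
    using finite_has_maximal[of "f ` C"] Suc.prems ne by auto
  then obtain M where M: "M \<in> C" "m = f M" by auto
  have big: "\<forall>R\<in>C - {M}. f R \<subset> f M \<and> g M \<subset> g R"
  proof
    fix R assume R: "R \<in> C - {M}"
    then have d: "(f M \<subset> f R \<and> g R \<subset> g M) \<or> (f R \<subset> f M \<and> g M \<subset> g R)"
      using Suc.prems(3) M(1) by blast
    have "f R \<in> f ` C" using R by blast
    then have "\<not> f M \<subset> f R" using m(2) M(2) by blast
    then show "f R \<subset> f M \<and> g M \<subset> g R" using d by blast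
  qed
  have "card (C - {M}) = k" using Suc.prems M by auto
  then obtain P' where P': "bij_betw P' {1..k} (C - {M})"
    "\<forall>i\<in>{1..k}. \<forall>j\<in>{1..k}. i < j \<longrightarrow> f (P' i) \<subset> f (P' j) \<and> g (P' j) \<subset> g (P' i)"
    using Suc.IH[of "C - {M}"] Suc.prems by auto
  define P where "P i = (if i = Suc k then M else P' i)" for i
  have b1: "bij_betw P {1..k} (C - {M})"
    using P'(1) by (rule bij_betw_cong[THEN iffD1, rotated]) (auto simp: P_def)
  have b2: "bij_betw P {Suc k} {M}" by (auto simp: P_def bij_betw_def)
  have "bij_betw P ({1..k} \<union> {Suc k}) ((C - {M}) \<union> {M})"
    by (rule bij_betw_combine[OF b1 b2]) auto
  moreover have "{1..k} \<union> {Suc k} = {1..Suc k}" by auto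
  moreover have "(C - {M}) \<union> {M} = C" using M by auto
  ultimately have bij: "bij_betw P {1..Suc k} C" by simp
  have mem: "P' i \<in> C - {M}" if "i \<in> {1..k}" for i
    using P'(1) that by (auto simp: bij_betw_def)
  show ?case
  proof (intro exI conjI)
    show "bij_betw P {1..Suc k} C" by (rule bij)
  next
    show "\<forall>i\<in>{1..Suc k}. \<forall>j\<in>{1..Suc k}. i < j \<longrightarrow> f (P i) \<subset> f (P j) \<and> g (P j) \<subset> g (P i)"
    proof (intro ballI impI)
    fix i j assume ij: "i \<in> {1..Suc k}" "j \<in> {1..Suc k}" "i < j"
    show "f (P i) \<subset> f (P j) \<and> g (P j) \<subset> g (P i)"
    proof (cases "j = Suc k")
      case True
      then have "i \<in> {1..k}" using ij by auto
      then show ?thesis using True big mem[of i] ij by (auto simp: P_def)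
    next
      case False
      then show ?thesis using ij P'(2) by (auto simp: P_def)
    qed
    qed
  qed
qed

theorem lemma4:
  fixes V :: "'a set" and E :: "'a \<Rightarrow> 'a \<Rightarrow> bool" and C :: "'a set set" and k :: nat
  assumes "graph V E"
    and "\<forall>P\<in>C. biclique V E P"
    and "card C = k"
    and "\<forall>P\<in>C. \<forall>Q\<in>C. P \<noteq> Q \<longrightarrow> mutually_included E P Q"
  shows "\<exists>P X Y :: nat \<Rightarrow> 'a set.
           bij_betw P {1..k} C
         \<and> (\<forall>i\<in>{1..k}. sides E (P i) (X i) (Y i))
         \<and> (\<forall>i\<in>{1..k}. \<forall>j\<in>{1..k}. i < j \<longrightarrow> X i \<subset> X j \<and> Y j \<subset> Y i)"
proof (cases "C = {}")
  case True
  then have "k = 0" using assms(3) by simp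
  then show ?thesis using True by (auto simp: bij_betw_def)
next
  case False
  have sym: "\<forall>x y. E x y \<longrightarrow> E y x" using assms(1) by (simp add: graph_def)
  have finC: "finite C"
  proof (rule finite_subset)
    show "C \<subseteq> Pow V" using assms(2) by (auto simp: biclique_def)
    show "finite (Pow V)" using assms(1) by (simp add: graph_def)
  qed
  obtain P1 where P1: "P1 \<in> C" using False by auto
  then obtain A B where AB: "sides E P1 A B"
    using assms(2) by (auto simp: biclique_def induces_complete_bipartite_def sides_def)
  have cAB: "complete_bip E A B" using AB by (simp add: sides_def)
  have "\<forall>Q\<in>C. \<exists>XY. sides E Q (fst XY) (snd XY) \<and> ori E A B (fst XY) (snd XY)"
  proof
    fix Q assume Q: "Q \<in> C"
    show "\<exists>XY. sides E Q (fst XY) (snd XY) \<and> ori E A B (fst XY) (snd XY)"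
    proof (cases "Q = P1")
      case True
      then show ?thesis using AB by (intro exI[of _ "(A, B)"]) (auto simp: ori_def)
    next
      case False
      then have "mutually_included E P1 Q" using assms(4) Q P1 by auto
      then obtain XP YP XQ YQ where m: "sides E P1 XP YP" "sides E Q XQ YQ" "XQ \<subset> XP" "YP \<subset> YQ"
        unfolding mutually_included_def by blast
      from sides_unique[OF sym AB m(1)] show ?thesis
      proof
        assume "XP = A \<and> YP = B"
        then show ?thesis using m by (intro exI[of _ "(XQ, YQ)"]) (auto simp: ori_def)
      next
        assume "XP = B \<and> YP = A"
        moreover have "sides E Q YQ XQ" using m(2)
          by (auto simp: sides_def complete_bip_def independent_def sym)
        ultimately show ?thesis using m by (intro exI[of _ "(YQ, XQ)"]) (auto simp: ori_def)
      qed
    qed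
  qed
  then obtain h where h: "\<forall>Q\<in>C. sides E Q (fst (h Q)) (snd (h Q)) \<and> ori E A B (fst (h Q)) (snd (h Q))"
    by (rule bchoice[elim_format]) blast
  define f where "f Q = fst (h Q)" for Q
  define g where "g Q = snd (h Q)" for Q
  have "\<forall>Q\<in>C. \<forall>R\<in>C. Q \<noteq> R \<longrightarrow> (f Q \<subset> f R \<and> g R \<subset> g Q) \<or> (f R \<subset> f Q \<and> g Q \<subset> g R)"
  proof (intro ballI impI)
    fix Q R assume QR: "Q \<in> C" "R \<in> C" "Q \<noteq> R"
    have "mutually_included E Q R" using assms(4) QR by blast
    moreover have "sides E Q (f Q) (g Q)" "ori E A B (f Q) (g Q)"
      "sides E R (f R) (g R)" "ori E A B (f R) (g R)"
      using h QR(1,2) unfolding f_def g_def by auto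
    ultimately show "(f Q \<subset> f R \<and> g R \<subset> g Q) \<or> (f R \<subset> f Q \<and> g Q \<subset> g R)"
      using rel[OF sym cAB] by blast
  qed
  from chain_enum[OF finC assms(3) this] obtain P where
    P: "bij_betw P {1..k} C"
      "\<forall>i\<in>{1..k}. \<forall>j\<in>{1..k}. i < j \<longrightarrow> f (P i) \<subset> f (P j) \<and> g (P j) \<subset> g (P i)"
    by blast
  have "\<forall>i\<in>{1..k}. sides E (P i) (f (P i)) (g (P i))"
  proof
    fix i assume "i \<in> {1..k}"
    then have "P i \<in> C" using P(1) unfolding bij_betw_def by blast
    then show "sides E (P i) (f (P i)) (g (P i))" using h unfolding f_def g_def by blast
  qed
  then show ?thesis using P(1) P(2) by (intro exI[of _ P] exI[of _ "\<lambda>i. f (P i)"] exI[of _ "\<lambda>i. g (P i)"]) simp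
qed

end
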